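(* Let $q=r^2$ with $r$ an odd prime power, $\theta$ a primitive element of $\mathbb{F}_q$, and $q-1=e_1f_1=e_2f_2$ with positive integers, where for some integer $l\geq 2$ we have $e_1\equiv 2^l\pmod{2^{l+1}}$ and $2^l\mid e_2$, and moreover $2e_2\mid e_1(r-1)$ and $e_1\mid e_2(r+1)$. Let $A=\langle\theta^{e_1}\rangle$, $B=\langle\theta^{e_2}\rangle$, $\beta=\theta^{e_2}$, $\gamma=\theta^{e_1/2}$, $D_1=\frac{e_1}{\gcd(e_1,e_2)}$, $D_2=\frac{e_2}{\gcd(e_1,e_2)}$. Let $1\leq s\leq D_1$, $1\leq t\leq D_2$, let $i_1,\dots,i_s$ be integers pairwise distinct modulo $D_1$ and $j_1,\dots,j_t$ integers pairwise distinct modulo $D_2$, and set $M=\bigcup_{\mu=1}^s\beta^{i_\mu}A$, $N=\bigcup_{\nu=1}^t\gamma^{2j_\nu+1}B$, $S=M\cup N$. Then $\eta(L_S(b))=(-1)^{\frac{(s-1)(r+1)}{2}}$ for every $b\in M$, and $\eta(L_S(b))=1$ for every $b\in N$.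
   Context: $\eta$ denotes the quadratic character of $\mathbb{F}_q^*$ ($\eta(x)=1$ if $x$ is a nonzero square, $-1$ otherwise). For a finite set $S\subseteq\mathbb{F}_q$ and $b\in S$, $L_S(b)=\prod_{c\in S,\,c\neq b}(b-c)$. $\langle x\rangle$ denotes the cyclic subgroup of $\mathbb{F}_q^*$ generated by $x$. *)

theory Defs
  imports "HOL-Computational_Algebra.Primes" "HOL-Library.Cardinality" "HOL-Number_Theory.Cong"
begin

definition qchar :: "'a::{finite,field} \<Rightarrow> int" where
  "qchar x = (if x = 0 then 0 else if (\<exists>y. y ^ 2 = x) then 1 else -1)"

definition LS :: "'a::field set \<Rightarrow> 'a \<Rightarrow> 'a" where
  "LS S b = (\<Prod>c\<in>S - {b}. (b - c))"

definition cyc :: "'a::field \<Rightarrow> 'a set" where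
  "cyc x = {x ^ k | k. True}"

definition primitive_elem :: "'a::{finite,field} \<Rightarrow> bool" where
  "primitive_elem \<theta> \<longleftrightarrow> \<theta> \<noteq> 0 \<and> (\<forall>x. x \<noteq> 0 \<longrightarrow> (\<exists>k::nat. x = \<theta> ^ k))"

definition prime_power :: "nat \<Rightarrow> bool" where
  "prime_power r \<longleftrightarrow> (\<exists>p k. prime p \<and> k \<ge> 1 \<and> r = p ^ k)"

end

theory Submission
  imports Defs "HOL-Computational_Algebra.Polynomial" "HOL-Number_Theory.Residues"
begin


lemma ff_pow_card1:
  fixes x :: "'a::{finite,field}"
  assumes "x \<noteq> 0"
  shows "x ^ (CARD('a) - 1) = 1"
proof -
  have c: "CARD('a) \<ge> 2"
  proof -
    have "{0::'a,1} \<subseteq> UNIV" by simp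
    hence "card {0::'a,1} \<le> CARD('a)" by (intro card_mono) auto
    thus ?thesis by simp
  qed
  have "x * (\<Prod>y\<in>UNIV-{0}. x * y) = x * x ^ (CARD('a) - 1) * \<Prod>(UNIV-{0::'a})"
    by (simp add: prod.distrib mult_ac card_Diff_singleton)
  also have "(\<Prod>y\<in>UNIV-{0}. x * y) = (\<Prod>y\<in>UNIV-{0::'a}. y)"
    by (rule prod.reindex_bij_witness[of _ "\<lambda>y. y / x" "\<lambda>y. x * y"]) (use assms in auto)
  finally have "x * \<Prod>(UNIV-{0::'a}) = x * x ^ (CARD('a) - 1) * \<Prod>(UNIV-{0::'a})" .
  moreover have "\<Prod>(UNIV-{0::'a}) \<noteq> 0" by (simp add: prod_zero_iff)
  ultimately show ?thesis using assms by simp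
qed

lemma prim_pow_eq_1:
  fixes \<theta> :: "'a::{finite,field}"
  assumes "primitive_elem \<theta>"
  shows "\<theta> ^ m = 1 \<longleftrightarrow> (CARD('a) - 1) dvd m"
proof
  have t0: "\<theta> \<noteq> 0" using assms by (simp add: primitive_elem_def)
  define n where "n = CARD('a) - 1"
  have c: "CARD('a) \<ge> 2"
  proof -
    have "{0::'a,1} \<subseteq> UNIV" by simp
    hence "card {0::'a,1} \<le> CARD('a)" by (intro card_mono) auto
    thus ?thesis by simp
  qed
  have tn: "\<theta> ^ n = 1" unfolding n_def by (rule ff_pow_card1[OF t0])
  assume m: "\<theta> ^ m = 1"
  show "(CARD('a) - 1) dvd m"
  proof (rule ccontr)
    assume nd: "\<not> (CARD('a) - 1) dvd m"
    define d where "d = m mod n"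
    have "n > 0" using c n_def by simp
    have dpos: "d > 0" using nd n_def d_def by (auto simp: dvd_eq_mod_eq_0)
    have dn: "d < n" using \<open>n>0\<close> d_def by simp
    have td: "\<theta> ^ d = 1"
    proof -
      have "\<theta>^m = (\<theta>^n)^(m div n) * \<theta>^d" unfolding d_def
        by (metis div_mult_mod_eq power_add power_mult mult.commute)
      thus ?thesis using m tn by simp
    qed
    have "UNIV - {0} \<subseteq> (\<lambda>k. \<theta>^k) ` {..<d}"
    proof
      fix x assume "x \<in> (UNIV::'a set) - {0}"
      then obtain k where k: "x = \<theta>^k" using assms by (auto simp: primitive_elem_def)
      have "\<theta>^k = (\<theta>^d)^(k div d) * \<theta>^(k mod d)"
        by (metis div_mult_mod_eq power_add power_mult mult.commute)
      hence "x = \<theta>^(k mod d)" using k td by simp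
      thus "x \<in> (\<lambda>k. \<theta>^k) ` {..<d}" using dpos by auto
    qed
    hence "card (UNIV - {0::'a}) \<le> card ((\<lambda>k. \<theta>^k) ` {..<d})" by (intro card_mono) auto
    also have "\<dots> \<le> d" using card_image_le[of "{..<d}" "\<lambda>k. \<theta>^k"] by simp
    finally show False using dn n_def by (simp add: card_Diff_singleton)
  qed
next
  assume "(CARD('a) - 1) dvd m"
  then obtain c where "m = (CARD('a) - 1) * c" by auto
  moreover have "\<theta> \<noteq> 0" using assms by (simp add: primitive_elem_def)
  ultimately show "\<theta> ^ m = 1" by (metis ff_pow_card1 power_mult power_one)
qed

lemma char_facts:
  assumes "prime_power r" "CARD('a::{finite,field}) = r^2"
  shows "\<exists>k. prime CHAR('a) \<and> k \<ge> 1 \<and> r = CHAR('a) ^ k"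
proof -
  obtain p k where pk: "prime p" "k \<ge> 1" "r = p^k" using assms(1) by (auto simp: prime_power_def)
  have cpos: "CHAR('a) > 0" by (rule finite_imp_CHAR_pos) simp
  have cp: "prime CHAR('a)" by (rule prime_CHAR_semidom[OF cpos])
  have "CHAR('a) dvd CARD('a)" by (rule CHAR_dvd_CARD)
  hence "CHAR('a) dvd p ^ (k * 2)" using assms(2) pk by (simp add: power_mult)
  hence "CHAR('a) dvd p" using cp prime_dvd_power by blast
  hence "CHAR('a) = p" using cp pk(1) by (simp add: primes_dvd_imp_eq)
  thus ?thesis using pk cp by blast
qed

lemma frob_add:
  fixes x y :: "'a::{finite,field}"
  assumes "prime_power r" "CARD('a) = r^2"
  shows "(x + y)^r = x^r + y^r"
proof -
  obtain k where k: "prime CHAR('a)" "r = CHAR('a)^k" using char_facts[OF assms] by blast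
  show ?thesis by (rule freshmans_dream'[OF k])
qed

lemma frob_diff:
  fixes x y :: "'a::{finite,field}"
  assumes "prime_power r" "CARD('a) = r^2" "odd r"
  shows "(x - y)^r = x^r - y^r"
proof -
  have "(x + (-y))^r = x^r + (-y)^r" by (rule frob_add[OF assms(1,2)])
  thus ?thesis using assms(3) by simp
qed

lemma frob_of_nat:
  assumes "prime_power r" "CARD('a::{finite,field}) = r^2"
  shows "(of_nat m :: 'a)^r = of_nat m"
proof (induction m)
  case 0
  have "r > 0" using assms(1) by (auto simp: prime_power_def prime_gt_0_nat)
  thus ?case by simp
next
  case (Suc m)
  have "(of_nat m + 1 :: 'a)^r = of_nat m ^ r + 1^r" by (rule frob_add[OF assms])
  thus ?case using Suc by (simp add: add.commute)
qed

lemma of_nat_nz: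
  assumes "prime_power r" "CARD('a::{finite,field}) = r^2" "m dvd r^2 - 1" "r \<ge> 2"
  shows "(of_nat m :: 'a) \<noteq> 0"
proof
  assume "(of_nat m :: 'a) = 0"
  hence d: "CHAR('a) dvd m" by (simp add: of_nat_eq_0_iff_char_dvd)
  obtain k where k: "prime CHAR('a)" "k \<ge> 1" "r = CHAR('a)^k" using char_facts[OF assms(1,2)] by blast
  have "CHAR('a) dvd r^2" using k by (simp add: power_mult[symmetric] dvd_power)
  moreover have "CHAR('a) dvd r^2 - 1" using d assms(3) dvd_trans by blast
  ultimately have "CHAR('a) dvd r^2 - (r^2 - 1)" by (rule dvd_diff_nat)
  moreover have "r^2 - (r^2 - 1) = 1" using assms(4) by simp
  ultimately show False using k by simp
qed

lemma two_nz:
  assumes "prime_power r" "CARD('a::{finite,field}) = r^2" "odd r"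
  shows "(2 :: 'a) \<noteq> 0"
proof
  assume "(2 :: 'a) = 0"
  hence "(of_nat 2 :: 'a) = 0" by simp
  hence d: "CHAR('a) dvd 2" by (simp only: of_nat_eq_0_iff_char_dvd)
  obtain k where k: "prime CHAR('a)" "k \<ge> 1" "r = CHAR('a)^k" using char_facts[OF assms(1,2)] by blast
  have "CHAR('a) = 2" using d k(1) by (metis prime_nat_iff two_is_prime_nat primes_dvd_imp_eq)
  thus False using k assms(3) by simp
qed

locale prim =
  fixes th :: "'a::{finite,field}" and nn :: nat
  assumes prim: "primitive_elem th" and nn_def: "nn = CARD('a) - 1"
begin


definition E :: "int \<Rightarrow> 'a" where "E z = th powi z"

lemma t0: "th \<noteq> 0" using prim by (simp add: primitive_elem_def)

lemma card_ge2: "CARD('a) \<ge> 2"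
proof -
  have "{0::'a,1} \<subseteq> UNIV" by simp
  hence "card {0::'a,1} \<le> CARD('a)" by (intro card_mono) auto
  thus ?thesis by simp
qed

lemma E_nz [simp]: "E z \<noteq> 0" using t0 by (simp add: E_def)

lemma E_add: "E (a + b) = E a * E b" using t0 by (simp add: E_def power_int_add)

lemma E_pow: "E z ^ m = E (z * int m)" by (simp add: E_def power_int_power')

lemma E_powi: "E z powi w = E (z * w)" by (simp add: E_def power_int_mult)

lemma E_nat: "th ^ m = E (int m)" by (simp add: E_def)

lemma E_0 [simp]: "E 0 = 1" by (simp add: E_def)

lemma E_one: "E z = 1 \<longleftrightarrow> int nn dvd z"
proof (cases "z \<ge> 0")
  case True
  then obtain m where z: "z = int m" by (metis nonneg_eq_int)
  have "th^m = 1 \<longleftrightarrow> nn dvd m" using prim_pow_eq_1[OF prim, of m] nn_def by simp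
  thus ?thesis by (simp add: z E_def)
next
  case False
  then obtain m where z: "z = - int m" by (metis le_cases neg_0_le_iff_le nonneg_eq_int minus_minus)
  have "E z = inverse (th ^ m)" by (simp add: z E_def power_int_minus)
  hence "E z = 1 \<longleftrightarrow> th ^ m = 1" by (metis inverse_1 inverse_inverse_eq)
  moreover have "th^m = 1 \<longleftrightarrow> nn dvd m" using prim_pow_eq_1[OF prim, of m] nn_def by simp
  ultimately show ?thesis by (simp add: z)
qed

lemma E_eq: "E a = E b \<longleftrightarrow> int nn dvd a - b"
proof -
  have "E a = E (a - b) * E b" by (simp flip: E_add)
  hence "E a = E b \<longleftrightarrow> E (a - b) = 1" using E_nz[of b] by (metis mult_cancel_right2)
  thus ?thesis using E_one by simp
qed

lemma E_surj: "(x::'a) \<noteq> 0 \<Longrightarrow> \<exists>k. x = E k"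
  using prim by (auto simp: primitive_elem_def E_nat)

lemma ff_pow: "(x::'a) \<noteq> 0 \<Longrightarrow> x ^ nn = 1" unfolding nn_def by (rule ff_pow_card1)

lemma qchar_E:
  fixes x :: 'a
  assumes odd: "odd (CARD('a))" and x: "x \<noteq> 0"
  shows "of_int (qchar x) = x ^ (nn div 2)"
proof -
  obtain k where k: "x = E k" using E_surj[OF x] by blast
  have nev: "even nn" using odd card_ge2 nn_def by simp
  then obtain h where h: "nn = 2 * h" by blast
  show ?thesis
  proof (cases "even k")
    case True
    then obtain m where m: "k = 2 * m" by blast
    have "x = (E m)^2" by (simp add: k m E_pow mult.commute)
    hence q: "qchar x = 1" using x by (auto simp: qchar_def)
    have "x ^ (nn div 2) = E (k * int h)" by (simp add: k E_pow h)
    also have "\<dots> = 1" unfolding E_one using h m by simp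
    finally show ?thesis using q by simp
  next
    case False
    have "\<not> (\<exists>y. y^2 = x)"
    proof
      assume "\<exists>y. y^2 = x"
      then obtain y where y: "y^2 = x" by blast
      hence "y \<noteq> 0" using x by auto
      then obtain m where "y = E m" using E_surj by blast
      hence "E (2 * m) = E k" using y k by (simp add: E_pow mult.commute)
      hence "int nn dvd 2 * m - k" using E_eq by blast
      moreover have "(2::int) dvd int nn" using h by simp
      ultimately have "(2::int) dvd 2 * m - k" using dvd_trans by blast
      thus False using False by presburger
    qed
    hence q: "qchar x = -1" using x by (auto simp: qchar_def)
    define w where "w = x ^ (nn div 2)"
    have "w^2 = 1" unfolding w_def using ff_pow[OF x] h by (simp add: mult.commute flip: power_mult)
    hence "w = 1 \<or> w = -1" by (metis power2_eq_1_iff)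
    moreover have "w \<noteq> 1"
    proof
      assume "w = 1"
      hence "E (k * int h) = 1" by (simp add: w_def k E_pow h)
      hence "int (2*h) dvd k * int h" using E_one h by metis
      then obtain c where c: "k * int h = int (2*h) * c" by (auto simp: dvd_def)
      have "h > 0" using h card_ge2 nn_def by simp
      have "(k - 2 * c) * int h = 0" using c by (simp add: algebra_simps)
      hence "k = 2 * c" using \<open>h > 0\<close> by simp
      hence "2 dvd k" by simp
      thus False using False by simp
    qed
    ultimately show ?thesis using q w_def by simp
  qed
qed

end




lemma roots_poly_eq:
  fixes C :: "'a::field set"
  assumes fin: "finite C" and card: "card C = f" and f1: "f \<ge> 1" and pw: "\<forall>c\<in>C. c^f = a0"
  shows "(\<Prod>c\<in>C. [:-c, 1:]) = [:0,1:]^f - [:a0:]"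
proof (rule poly_eqI_degree_lead_coeff[of _ f _ C])
  have nz: "\<forall>c\<in>C. [:-c, 1::'a:] \<noteq> 0" by simp
  have dP: "degree (\<Prod>c\<in>C. [:-c, 1:]) = f"
    using degree_prod_eq_sum_degree[OF nz] card by simp
  have "lead_coeff (\<Prod>c\<in>C. [:-c, 1:]) = 1" by (simp add: lead_coeff_prod)
  thus "poly.coeff (\<Prod>c\<in>C. [:-c, 1:]) f = poly.coeff ([:0,1:]^f - [:a0:]) f"
    using dP f1 coeff_linear_power[of "0::'a" f] by (cases f) auto
  show "card C \<ge> f" using card by simp
  show "degree (\<Prod>c\<in>C. [:-c, 1:]) \<le> f" using dP by simp
  show "degree ([:0,1:]^f - [:a0:]) \<le> f"
    by (intro degree_diff_le) (auto intro: order.trans[OF degree_power_le])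
  fix z assume "z \<in> C"
  hence "poly (\<Prod>c\<in>C. [:-c, 1:]) z = 0" using fin by (auto simp: poly_prod prod_zero_iff)
  moreover have "poly ([:0,1:]^f - [:a0:]) z = 0" using pw \<open>z\<in>C\<close> by (simp add: poly_power)
  ultimately show "poly (\<Prod>c\<in>C. [:-c, 1:]) z = poly ([:0,1:]^f - [:a0:]) z" by simp
qed

lemma roots_prod_outside:
  fixes C :: "'a::field set"
  assumes fin: "finite C" and card: "card C = f" and f1: "f \<ge> 1" and pw: "\<forall>c\<in>C. c^f = a0"
  shows "(\<Prod>c\<in>C. (x - c)) = x^f - a0"
proof -
  have "poly (\<Prod>c\<in>C. [:-c, 1:]) x = poly ([:0,1:]^f - [:a0:]) x"
    using roots_poly_eq[OF assms] by simp
  thus ?thesis by (simp add: poly_prod poly_power)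
qed

lemma roots_prod_inside:
  fixes C :: "'a::field set"
  assumes fin: "finite C" and card: "card C = f" and f1: "f \<ge> 1" and pw: "\<forall>c\<in>C. c^f = a0"
    and b: "b \<in> C"
  shows "(\<Prod>c\<in>C-{b}. (b - c)) = of_nat f * b^(f-1)"
proof -
  define P' where "P' = (\<Prod>c\<in>C-{b}. [:-c, 1::'a:])"
  define G where "G = (\<Sum>i<f. [:b:]^(f - Suc i) * [:0,1::'a:]^i)"
  have "[:-b,1:] * P' = (\<Prod>c\<in>C. [:-c, 1:])" unfolding P'_def by (rule prod.remove[OF fin b, symmetric])
  also have "\<dots> = [:0,1:]^f - [:a0:]" by (rule roots_poly_eq[OF fin card f1 pw])
  also have "[:a0:] = [:b:]^f" using pw b by (simp add: poly_const_pow)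
  also have "[:0,1:]^f - [:b:]^f = ([:0,1:] - [:b:]) * G" unfolding G_def by (rule power_diff_sumr2)
  also have "[:0,1:] - [:b:] = [:-b,1::'a:]" by simp
  finally have "[:-b,1:] * P' = [:-b,1:] * G" .
  hence "P' = G" by (subst (asm) mult_cancel_left) simp
  hence "poly G b = poly (\<Prod>c\<in>C-{b}. [:-c, 1::'a:]) b" unfolding P'_def by simp
  hence "(\<Prod>c\<in>C-{b}. (b - c)) = poly G b" by (simp add: poly_prod)
  also have "\<dots> = (\<Sum>i<f. b^(f - Suc i) * b^i)" unfolding G_def by (simp add: poly_sum poly_power)
  also have "\<dots> = (\<Sum>i<f. b^(f - 1))"
    by (rule sum.cong) (auto simp flip: power_add)
  finally show ?thesis by simp
qed




locale fin = prim th nn for th :: "'a::{finite,field}" and nn :: nat +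
  fixes r :: nat
  assumes pp: "prime_power r" and oddr: "odd r" and cardr: "CARD('a) = r^2"
begin

definition R where "R = (r + 1) div 2"

lemma r3: "r \<ge> 3"
proof -
  obtain p k where "prime p" "k \<ge> 1" "r = p^k" using pp by (auto simp: prime_power_def)
  hence "r \<ge> 2" by (metis One_nat_def less_one not_less power_0 power_eq_0_iff prime_ge_2_nat
        le_trans self_le_power zero_less_iff_neq_zero prime_gt_0_nat)
  thus ?thesis using oddr by presburger
qed

lemma nn_eq: "nn = r^2 - 1" using nn_def cardr by simp

lemma r1_2R: "r + 1 = 2 * R" unfolding R_def using oddr by simp

lemma nn_half: "nn div 2 = (r - 1) * R"
proof -
  have "nn = (r - 1) * (r + 1)" using nn_eq r3 by (simp add: power2_eq_square algebra_simps)
  also have "\<dots> = 2 * ((r - 1) * R)" using r1_2R by simp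
  finally show ?thesis by simp
qed

lemma even_r1: "even (r - 1)" using oddr r3 by simp

lemma chi_fix:
  fixes x :: 'a
  assumes "x \<noteq> 0" "x^r = x"
  shows "x ^ (nn div 2) = 1"
proof -
  have "x^(r-1) * x = x * 1" using assms r3 by (metis One_nat_def Suc_pred mult.commute mult_1_right power_Suc le_trans not_less_eq_eq numeral_3_eq_3 zero_less_Suc less_imp_le_nat Suc_le_lessD)
  hence "x^(r-1) = 1" using assms(1) by simp
  thus ?thesis by (simp add: nn_half power_mult)
qed

lemma chi_m1: "(-1::'a) ^ (nn div 2) = 1"
  using even_r1 by (simp add: nn_half)

lemma rpow_split: "x ^ r = x ^ (r - 1) * (x::'a)"
  using r3 by (metis One_nat_def Suc_pred power_Suc2 le_trans numeral_3_eq_3 zero_less_Suc less_imp_le_nat Suc_le_lessD)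

lemma R1:
  fixes x y :: 'a
  assumes "x \<noteq> y" "x^r * x = 1" "y^r * y = 1" "(x*y)^R = 1"
  shows "(x - y) ^ (nn div 2) = (-1)^R"
proof -
  define d where "d = x - y"
  have d0: "d \<noteq> 0" using assms(1) d_def by simp
  have x0: "x \<noteq> 0" and y0: "y \<noteq> 0" using assms(2,3) by auto
  have "d^r = x^r - y^r" unfolding d_def by (rule frob_diff[OF pp cardr oddr])
  also have "x^r = 1/x" using assms(2) x0 by (simp add: field_simps)
  also have "y^r = 1/y" using assms(3) y0 by (simp add: field_simps)
  finally have "d^r * (x*y) = - d" using x0 y0 unfolding d_def by (simp add: field_simps)
  hence "d^(r-1) * d * (x*y) = -1 * d" by (simp add: rpow_split)
  hence "d^(r-1) * (x*y) = -1" using d0 by (metis mult.commute mult.left_commute mult_cancel_left)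
  hence "(d^(r-1) * (x*y))^R = (-1)^R" by simp
  hence "(d^(r-1))^R = (-1)^R" using assms(4) by (simp add: power_mult_distrib)
  thus ?thesis unfolding d_def by (simp add: nn_half power_mult)
qed

lemma R2:
  fixes x y :: 'a
  assumes "x \<noteq> - y" "x^r * x = 1" "y^r * y = 1" "(x*y)^R = 1"
  shows "(-(x + y)) ^ (nn div 2) = 1"
proof -
  define d where "d = x + y"
  have d0: "d \<noteq> 0" using assms(1) d_def by (simp add: add_eq_0_iff2)
  have x0: "x \<noteq> 0" and y0: "y \<noteq> 0" using assms(2,3) by auto
  have "d^r = x^r + y^r" unfolding d_def by (rule frob_add[OF pp cardr])
  also have "x^r = 1/x" using assms(2) x0 by (simp add: field_simps)
  also have "y^r = 1/y" using assms(3) y0 by (simp add: field_simps)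
  finally have "d^r * (x*y) = d" using x0 y0 unfolding d_def by (simp add: field_simps)
  hence "d^(r-1) * d * (x*y) = 1 * d" by (simp add: rpow_split)
  hence "d^(r-1) * (x*y) = 1" using d0 by (metis mult.commute mult.left_commute mult_cancel_left)
  hence "(d^(r-1) * (x*y))^R = 1" by simp
  hence "(d^(r-1))^R = 1" using assms(4) by (simp add: power_mult_distrib)
  hence "d ^ (nn div 2) = 1" by (simp add: nn_half power_mult)
  moreover have "(-d) ^ (nn div 2) = (-1)^(nn div 2) * d^(nn div 2)"
    by (metis mult_minus1 power_mult_distrib)
  ultimately show ?thesis using chi_m1 d_def by simp
qed

lemma Fix_diff:
  fixes x y :: 'a
  assumes "x \<noteq> y" "x^r = x" "y^r = y"
  shows "(x - y) ^ (nn div 2) = 1"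
proof (rule chi_fix)
  show "x - y \<noteq> 0" using assms by simp
  show "(x - y)^r = x - y" using frob_diff[OF pp cardr oddr, of x y] assms by simp
qed

lemma E_fix: "int nn dvd z * (int r - 1) \<Longrightarrow> E z ^ r = E z"
proof -
  assume a: "int nn dvd z * (int r - 1)"
  have "E z ^ r = E z * E (z * (int r - 1))" by (simp add: E_pow flip: E_add) (simp add: algebra_simps)
  also have "E (z * (int r - 1)) = 1" using a E_one by simp
  finally show ?thesis by simp
qed

lemma E_mu: "int nn dvd z * int R \<Longrightarrow> E z ^ r * E z = 1"
proof -
  assume a: "int nn dvd z * int R"
  have "E z ^ r * E z = E (z * (int r + 1))" by (simp add: E_pow flip: E_add) (simp add: algebra_simps)
  also have "int r + 1 = 2 * int R" using r1_2R by linarith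
  also have "E (z * (2 * int R)) = 1" using a E_one by (metis dvd_mult2 mult.left_commute mult.commute)
  finally show ?thesis .
qed

lemma nn_pos: "nn > 0" using nn_def card_ge2 by simp
lemma nn_even: "even nn" using nn_eq oddr by simp

lemma h2: "2 * int (nn div 2) = int nn"
  using nn_even by (metis dvd_mult_div_cancel of_nat_mult of_nat_numeral)

lemma E_half: "E (int (nn div 2)) = -1"
proof -
  define w where "w = E (int (nn div 2))"
  have "w^2 = E (int nn)" unfolding w_def by (simp add: E_pow mult.commute h2)
  also have "\<dots> = 1" using E_one by simp
  finally have "w = 1 \<or> w = -1" by (metis power2_eq_1_iff)
  moreover have "w \<noteq> 1"
  proof
    assume "w = 1"
    hence "int nn dvd int (nn div 2)" using E_one w_def by simp
    hence "nn dvd nn div 2" by simp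
    moreover have "0 < nn div 2" using nn_pos nn_even by (metis dvd_div_eq_0_iff gr0I less_numeral_extra(3))
    ultimately have "nn \<le> nn div 2" by (simp add: dvd_imp_le)
    thus False using nn_pos by simp
  qed
  ultimately show ?thesis unfolding w_def by simp
qed

lemma chi_E_even: "even z \<Longrightarrow> E z ^ (nn div 2) = 1"
proof -
  assume "even z"
  then obtain m where "z = 2 * m" by blast
  hence "E z ^ (nn div 2) = E (m * (2 * int (nn div 2)))" by (simp add: E_pow algebra_simps)
  hence "E z ^ (nn div 2) = E (m * int nn)" by (simp only: h2)
  thus ?thesis using E_one by simp
qed

lemma chi_of_nat: "m dvd nn \<Longrightarrow> (of_nat m :: 'a) ^ (nn div 2) = 1"
  by (rule chi_fix) (use of_nat_nz[OF pp cardr _ ] frob_of_nat[OF pp cardr] nn_eq r3 in auto)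

lemma qchar_chi: "(x::'a) \<noteq> 0 \<Longrightarrow> of_int (qchar x) = x ^ (nn div 2)"
  using qchar_E[of x] nn_eq cardr oddr nn_def by simp

end



context prim
begin

lemma th_inj: "a < nn \<Longrightarrow> b < nn \<Longrightarrow> th^a = th^b \<Longrightarrow> a = b"
proof -
  assume a: "a < nn" "b < nn" "th^a = th^b"
  hence d: "int nn dvd int a - int b" using E_eq by (simp add: E_nat)
  show "a = b"
  proof (rule ccontr)
    assume "a \<noteq> b"
    hence "int a - int b \<noteq> 0" by simp
    from dvd_imp_le_int[OF this d] have "int nn \<le> \<bar>int a - int b\<bar>" by simp
    thus False using a by linarith
  qed
qed

lemma cyc_props:
  assumes "e * f = nn"
  shows "finite (cyc (th^e)) \<and> card (cyc (th^e)) = f \<and> (\<forall>h\<in>cyc (th^e). h^f = 1)"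
proof -
  have nn1: "nn \<ge> 1" using nn_def card_ge2 by simp
  have f0: "f > 0" using assms nn1 by (cases f) auto
  have e0: "e > 0" using assms nn1 by (cases e) auto
  have thf: "(th^e)^f = 1" using assms ff_pow t0 by (simp flip: power_mult)
  have eq: "cyc (th^e) = (\<lambda>k. (th^e)^k) ` {..<f}"
  proof
    show "cyc (th^e) \<subseteq> (\<lambda>k. (th^e)^k) ` {..<f}"
    proof
      fix x assume "x \<in> cyc (th^e)"
      then obtain k where k: "x = (th^e)^k" by (auto simp: cyc_def)
      have "(th^e)^k = ((th^e)^f)^(k div f) * (th^e)^(k mod f)"
        by (metis div_mult_mod_eq power_add power_mult mult.commute)
      hence "x = (th^e)^(k mod f)" using k thf by simp
      thus "x \<in> (\<lambda>k. (th^e)^k) ` {..<f}" using f0 by auto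
    qed
  qed (auto simp: cyc_def)
  have inj: "inj_on (\<lambda>k. (th^e)^k) {..<f}"
  proof
    fix a b assume ab: "a \<in> {..<f}" "b \<in> {..<f}" "(th^e)^a = (th^e)^b"
    have "e * a < nn" "e * b < nn" using ab assms e0 by auto
    moreover have "th^(e*a) = th^(e*b)" using ab by (simp add: power_mult)
    ultimately have "e * a = e * b" using th_inj by blast
    thus "a = b" using e0 by simp
  qed
  have "\<forall>h\<in>cyc (th^e). h^f = 1"
  proof
    fix h assume "h \<in> cyc (th^e)"
    then obtain k where k: "h = (th^e)^k" by (auto simp: cyc_def)
    have "h^f = ((th^e)^f)^k" unfolding k by (simp only: power_mult[symmetric] mult_ac)
    thus "h^f = 1" using thf by simp
  qed
  thus ?thesis using eq inj by (simp add: card_image)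
qed

lemma coset_props:
  assumes "e * f = nn" "w \<noteq> 0"
  shows "finite ((\<lambda>a. w * a) ` cyc (th^e)) \<and> card ((\<lambda>a. w * a) ` cyc (th^e)) = f
     \<and> (\<forall>c\<in>(\<lambda>a. w * a) ` cyc (th^e). c^f = w^f)"
proof -
  have inj: "inj_on (\<lambda>a. w * a) (cyc (th^e))" using assms(2) by (auto intro: inj_onI)
  show ?thesis using cyc_props[OF assms(1)] inj by (auto simp: card_image power_mult_distrib)
qed

end



lemma aux_cancel:
  fixes g e1 e2 D1 D2 x :: nat
  assumes "g > 0" "e1 = D1*g" "e2 = D2*g" "e1 dvd e2 * x"
  shows "D1 dvd D2 * x"
proof -
  have "g * D1 dvd g * (D2 * x)" using assms(2,3,4) by (simp add: mult_ac)
  thus ?thesis using assms(1) nat_mult_dvd_cancel_disj[of g D1 "D2 * x"] by simp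
qed

lemma aux_cancel_int:
  fixes g e1 e2 D1 D2 :: nat and x y :: int
  assumes "g > 0" "e1 = D1*g" "e2 = D2*g" "coprime D1 D2" "int e1 dvd int e2 * x + int e1 * y"
  shows "int D1 dvd x"
proof -
  have "int e1 dvd int e2 * x" using assms(5) by (simp add: dvd_add_left_iff)
  hence "int g * int D1 dvd int g * (int D2 * x)" using assms(2,3) by (simp add: mult_ac)
  hence "int D1 dvd int D2 * x" using assms(1) by simp
  moreover have "coprime (int D1) (int D2)" using assms(4) by simp
  ultimately show ?thesis using coprime_dvd_mult_right_iff[of "int D1" "int D2" x] by simp
qed

lemma aux_nnD:
  fixes g e1 e2 D1 D2 f2 nn :: nat
  assumes "e1 = D1*g" "e2 = D2*g" "nn = e2 * f2"
  shows "e1 * f2 * D2 = D1 * nn"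
  using assms by (simp add: mult_ac)

locale mctx = fin th nn r for th :: "'a::{finite,field}" and nn r +
  fixes e1 f1 e2 f2 l :: nat
  assumes pos: "e1 > 0" "f1 > 0" "e2 > 0" "f2 > 0"
  and n1: "nn = e1 * f1" and n2: "nn = e2 * f2"
  and l2: "l \<ge> 2" and e1mod: "e1 mod 2^(l+1) = 2^l" and e2dvd: "2^l dvd e2"
  and c1: "2 * e2 dvd e1 * (r - 1)" and c2: "e1 dvd e2 * (r + 1)"
begin

definition g where "g = gcd e1 e2"
definition D1 where "D1 = e1 div g"
definition D2 where "D2 = e2 div g"
definition h1 where "h1 = e1 div 2"

lemma g0: "g > 0" using pos by (simp add: g_def)
lemma e1g: "e1 = D1 * g" unfolding D1_def g_def by simp
lemma e2g: "e2 = D2 * g" unfolding D2_def g_def by simp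
lemma copD: "coprime D1 D2" unfolding D1_def D2_def g_def using pos by (intro div_gcd_coprime) auto

lemma e1o: "\<exists>o1. e1 = 2^l * o1 \<and> odd o1"
proof -
  have "e1 = e1 div 2^(l+1) * 2^(l+1) + 2^l" using e1mod div_mult_mod_eq[of e1 "2^(l+1)"] by simp
  hence "e1 = 2^l * (2 * (e1 div 2^(l+1)) + 1)" by (simp add: algebra_simps)
  thus ?thesis by (intro exI[of _ "2 * (e1 div 2^(l+1)) + 1"]) simp
qed

lemma D1odd: "odd D1"
proof
  assume "even D1"
  from e1o obtain o1 where o1': "e1 = 2^l * o1 \<and> odd o1" ..
  hence o1: "e1 = 2^l * o1" "odd o1" by auto
  have "2^l dvd g" unfolding g_def using o1 e2dvd by simp
  with \<open>even D1\<close> have "2 * 2^l dvd D1 * g" by (simp add: mult_dvd_mono)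
  hence "2^l * 2 dvd 2^l * o1" using e1g o1 by (simp add: mult.commute)
  hence "2 dvd o1" by (simp add: nat_mult_dvd_cancel_disj)
  thus False using o1 by simp
qed

lemma D1R: "D1 dvd R"
proof -
  have "D1 dvd D2 * (r + 1)" by (rule aux_cancel[OF g0 e1g e2g c2])
  hence "D1 dvd r + 1" using coprime_dvd_mult_right_iff[of D1 D2 "r+1"] copD by simp
  hence "D1 dvd 2 * R" using r1_2R by simp
  moreover have "coprime D1 2" using D1odd by simp
  ultimately show ?thesis using coprime_dvd_mult_right_iff[of D1 2 R] by simp
qed

lemma D2r: "2 * D2 dvd r - 1"
proof -
  have e2g': "2 * e2 = (2 * D2) * g" using e2g by simp
  have "2 * D2 dvd D1 * (r - 1)" by (rule aux_cancel[OF g0 e2g' e1g c1])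
  moreover have "coprime (2 * D2) D1" using D1odd copD by (simp add: coprime_commute)
  ultimately show ?thesis using coprime_dvd_mult_right_iff[of "2*D2" D1 "r - 1"] by simp
qed

lemma e1even: "e1 = 2 * h1"
proof -
  from e1o obtain o1 where o1': "e1 = 2^l * o1 \<and> odd o1" ..
  hence "even e1" using l2 by (cases l) auto
  thus ?thesis unfolding h1_def by simp
qed

lemma nnD2: "e1 * f2 * D2 = D1 * nn"
  by (rule aux_nnD[OF e1g e2g n2])

lemma nnD1: "e2 * f1 * D1 = D2 * nn"
  by (rule aux_nnD[OF e2g e1g n1])

lemma H1: "nn dvd e2 * f1 * R"
proof -
  obtain c where "R = D1 * c" using D1R by (auto simp: dvd_def)
  hence "e2 * f1 * R = (D2 * nn) * c" using nnD1 by (simp add: mult_ac)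
  thus ?thesis by simp
qed

lemma H2: "nn dvd e1 * f2 * (r - 1)"
proof -
  obtain c where "r - 1 = 2 * D2 * c" using D2r by (auto simp: dvd_def)
  hence "e1 * f2 * (r - 1) = 2 * (D1 * nn) * c" using nnD2 by (simp add: mult_ac)
  thus ?thesis by simp
qed

lemma H3: "nn dvd h1 * f2 * (r - 1)"
proof -
  obtain c where "r - 1 = 2 * D2 * c" using D2r by (auto simp: dvd_def)
  hence "h1 * f2 * (r - 1) = (2 * h1) * f2 * D2 * c" by (simp add: mult_ac)
  also have "\<dots> = (D1 * nn) * c" using nnD2 e1even by simp
  finally show ?thesis by simp
qed

lemma h1f1: "h1 * f1 = nn div 2"
proof -
  have "nn = 2 * (h1 * f1)" using e1even n1 by simp
  thus ?thesis by simp
qed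

lemma nn_2l: "2^l dvd nn"
proof -
  from e1o obtain o1 where o1': "e1 = 2^l * o1 \<and> odd o1" ..
  thus ?thesis using n1 by simp
qed

lemma h1_even: "even h1"
proof -
  from e1o obtain o1 where o1': "e1 = 2^l * o1 \<and> odd o1" ..
  obtain m where "l = Suc (Suc m)" using l2 by (metis add_2_eq_Suc le_iff_add)
  hence "e1 = 2 * (2 * (2^m * o1))" using o1' by simp
  hence "h1 = 2 * (2^m * o1)" using e1even by linarith
  thus ?thesis by simp
qed

lemma e2_even: "even e2"
proof -
  have "(2::nat) dvd 2^l" using l2 by (cases l) auto
  thus ?thesis using e2dvd dvd_trans by auto
qed

lemma h1_odd_part_int: "\<not> (2::int)^l dvd int h1 * (2 * x + 1)"
proof
  assume a: "(2::int)^l dvd int h1 * (2 * x + 1)"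
  from e1o obtain o1 where o1': "e1 = 2^l * o1 \<and> odd o1" ..
  obtain m where m: "l = Suc m" using l2 by (cases l) auto
  have "e1 = 2 * (2^m * o1)" using o1' m by simp
  hence "h1 = 2^m * o1" using e1even by linarith
  hence "int h1 = 2^m * int o1" by simp
  hence "2^m * 2 dvd (2::int)^m * (int o1 * (2 * x + 1))" using a m by (simp only: mult_ac power_Suc)
  hence "2 dvd int o1 * (2 * x + 1)" using dvd_mult_cancel_left[of "(2::int)^m" 2 "int o1 * (2 * x + 1)"] by simp
  thus False using o1' by simp
qed

lemma h1_odd_part: "\<not> 2^l dvd h1 * (2 * x + 1)"
proof
  assume a: "2^l dvd h1 * (2 * x + 1)"
  from e1o obtain o1 where o1': "e1 = 2^l * o1 \<and> odd o1" ..
  obtain m where m: "l = Suc m" using l2 by (cases l) auto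
  have "e1 = 2 * (2^m * o1)" using o1' m by simp
  hence "h1 = 2^m * o1" using e1even by linarith
  hence "2^m * 2 dvd 2^m * (o1 * (2 * x + 1))" using a m by (simp only: mult_ac power_Suc)
  hence "2 dvd o1 * (2 * x + 1)" using nat_mult_dvd_cancel_disj[of "2^m" 2 "o1 * (2 * x + 1)"] by simp
  thus False using o1' by simp
qed

end

locale mctx2 = mctx th nn r e1 f1 e2 f2 l
  for th :: "'a::{finite,field}" and nn r e1 f1 e2 f2 l +
  fixes s t :: nat and i j :: "nat \<Rightarrow> int"
  assumes s1: "1 \<le> s" and t1: "1 \<le> t"
  and di: "\<forall>\<mu>\<in>{1..s}. \<forall>\<mu>'\<in>{1..s}. \<mu> \<noteq> \<mu>' \<longrightarrow>
            \<not> [i \<mu> = i \<mu>'] (mod int (e1 div gcd e1 e2))"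
  and dj: "\<forall>\<nu>\<in>{1..t}. \<forall>\<nu>'\<in>{1..t}. \<nu> \<noteq> \<nu>' \<longrightarrow>
            \<not> [j \<nu> = j \<nu>'] (mod int (e2 div gcd e1 e2))"
begin

definition Cm where "Cm \<mu> = (\<lambda>a. (th^e2) powi (i \<mu>) * a) ` cyc (th^e1)"
definition Cn where "Cn \<nu> = (\<lambda>a. (th^(e1 div 2)) powi (2 * j \<nu> + 1) * a) ` cyc (th^e2)"

lemma beta_E: "(th^e2) powi z = E (int e2 * z)" by (simp add: E_nat E_powi)
lemma gamma_E: "(th^(e1 div 2)) powi z = E (int h1 * z)" by (simp add: E_nat E_powi h1_def)

lemma cyc_mem: "x \<in> cyc (th^e) \<longleftrightarrow> (\<exists>k::nat. x = E (int e * int k))"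
  by (simp add: cyc_def E_nat E_pow)

lemma memM: "c \<in> Cm \<mu> \<longleftrightarrow> (\<exists>k::nat. c = E (int e2 * i \<mu> + int e1 * int k))"
  by (auto simp: Cm_def image_iff cyc_mem beta_E E_add)

lemma memN: "c \<in> Cn \<nu> \<longleftrightarrow> (\<exists>k::nat. c = E (int h1 * (2 * j \<nu> + 1) + int e2 * int k))"
  by (auto simp: Cn_def image_iff cyc_mem gamma_E E_add)

lemma Cm_props: "finite (Cm \<mu>) \<and> card (Cm \<mu>) = f1 \<and> (\<forall>c\<in>Cm \<mu>. c^f1 = E (int e2 * i \<mu>) ^ f1)"
  using coset_props[of e1 f1 "(th^e2) powi (i \<mu>)"] n1 by (simp add: Cm_def beta_E)

lemma Cn_props: "finite (Cn \<nu>) \<and> card (Cn \<nu>) = f2 \<and> (\<forall>c\<in>Cn \<nu>. c^f2 = E (int h1 * (2 * j \<nu> + 1)) ^ f2)"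
  using coset_props[of e2 f2 "(th^(e1 div 2)) powi (2 * j \<nu> + 1)"] n2 by (simp add: Cn_def gamma_E)

lemma dM: "\<mu> \<in> {1..s} \<Longrightarrow> \<mu>' \<in> {1..s} \<Longrightarrow> \<mu> \<noteq> \<mu>' \<Longrightarrow> Cm \<mu> \<inter> Cm \<mu>' = {}"
proof (rule ccontr)
  assume a: "\<mu> \<in> {1..s}" "\<mu>' \<in> {1..s}" "\<mu> \<noteq> \<mu>'" "Cm \<mu> \<inter> Cm \<mu>' \<noteq> {}"
  then obtain c where c: "c \<in> Cm \<mu>" "c \<in> Cm \<mu>'" by blast
  obtain k where k: "c = E (int e2 * i \<mu> + int e1 * int k)" using c(1) memM by auto
  obtain k' where k': "c = E (int e2 * i \<mu>' + int e1 * int k')" using c(2) memM by auto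
  have "E (int e2 * i \<mu> + int e1 * int k) = E (int e2 * i \<mu>' + int e1 * int k')" using k k' by simp
  hence "int nn dvd (int e2 * i \<mu> + int e1 * int k) - (int e2 * i \<mu>' + int e1 * int k')"
    using E_eq by simp
  moreover have "int e1 dvd int nn" using n1 by simp
  ultimately have "int e1 dvd int e2 * (i \<mu> - i \<mu>') + int e1 * (int k - int k')"
    by (metis (no_types, lifting) dvd_trans right_diff_distrib add_diff_add)
  hence "int D1 dvd i \<mu> - i \<mu>'" by (rule aux_cancel_int[OF g0 e1g e2g copD])
  hence "[i \<mu> = i \<mu>'] (mod int (e1 div gcd e1 e2))" by (simp add: cong_iff_dvd_diff D1_def g_def)
  thus False using di a by blast
qed


lemma dN: "\<nu> \<in> {1..t} \<Longrightarrow> \<nu>' \<in> {1..t} \<Longrightarrow> \<nu> \<noteq> \<nu>' \<Longrightarrow> Cn \<nu> \<inter> Cn \<nu>' = {}"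
proof (rule ccontr)
  assume a: "\<nu> \<in> {1..t}" "\<nu>' \<in> {1..t}" "\<nu> \<noteq> \<nu>'" "Cn \<nu> \<inter> Cn \<nu>' \<noteq> {}"
  then obtain c where c: "c \<in> Cn \<nu>" "c \<in> Cn \<nu>'" by blast
  obtain k where k: "c = E (int h1 * (2 * j \<nu> + 1) + int e2 * int k)" using c(1) memN by auto
  obtain k' where k': "c = E (int h1 * (2 * j \<nu>' + 1) + int e2 * int k')" using c(2) memN by auto
  have "E (int h1 * (2 * j \<nu> + 1) + int e2 * int k) = E (int h1 * (2 * j \<nu>' + 1) + int e2 * int k')"
    using k k' by simp
  hence "int nn dvd (int h1 * (2 * j \<nu> + 1) + int e2 * int k) - (int h1 * (2 * j \<nu>' + 1) + int e2 * int k')"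
    using E_eq by simp
  moreover have "int e2 dvd int nn" using n2 by simp
  moreover have "(int h1 * (2 * j \<nu> + 1) + int e2 * int k) - (int h1 * (2 * j \<nu>' + 1) + int e2 * int k')
      = int e1 * (j \<nu> - j \<nu>') + int e2 * (int k - int k')"
  proof -
    have ie: "int e1 = 2 * int h1" using e1even by simp
    show ?thesis unfolding ie by (simp add: algebra_simps)
  qed
  ultimately have "int e2 dvd int e1 * (j \<nu> - j \<nu>') + int e2 * (int k - int k')"
    by (metis dvd_trans)
  hence "int D2 dvd j \<nu> - j \<nu>'" by (rule aux_cancel_int[OF g0 e2g e1g copD[unfolded coprime_commute[of D1]]])
  hence "[j \<nu> = j \<nu>'] (mod int (e2 div gcd e1 e2))" by (simp add: cong_iff_dvd_diff D2_def g_def)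
  thus False using dj a by blast
qed

lemma dMN: "Cm \<mu> \<inter> Cn \<nu> = {}"
proof (rule ccontr)
  assume "Cm \<mu> \<inter> Cn \<nu> \<noteq> {}"
  then obtain c where c: "c \<in> Cm \<mu>" "c \<in> Cn \<nu>" by blast
  obtain k where k: "c = E (int e2 * i \<mu> + int e1 * int k)" using c(1) memM by auto
  obtain k' where k': "c = E (int h1 * (2 * j \<nu> + 1) + int e2 * int k')" using c(2) memN by auto
  define X where "X = int e2 * i \<mu> + int e1 * int k"
  define Y where "Y = int h1 * (2 * j \<nu> + 1) + int e2 * int k'"
  have "E X = E Y" using k k' X_def Y_def by simp
  hence "int nn dvd X - Y" using E_eq by simp
  moreover have "(2::int)^l dvd int nn" using nn_2l by (metis of_nat_dvd_iff of_nat_numeral of_nat_power)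
  ultimately have d1: "(2::int)^l dvd X - Y" by (rule dvd_trans[rotated])
  from e1o obtain o1 where o1': "e1 = 2^l * o1 \<and> odd o1" ..
  have "(2::int)^l dvd int e1" using o1' by simp
  moreover have "(2::int)^l dvd int e2" using e2dvd by (metis of_nat_dvd_iff of_nat_numeral of_nat_power)
  ultimately have d2: "(2::int)^l dvd int e2 * i \<mu> + int e1 * int k - int e2 * int k'"
    by (intro dvd_diff dvd_add dvd_mult2)
  have "int h1 * (2 * j \<nu> + 1) = (int e2 * i \<mu> + int e1 * int k - int e2 * int k') - (X - Y)"
    unfolding X_def Y_def by simp
  hence "(2::int)^l dvd int h1 * (2 * j \<nu> + 1)" using d1 d2 by (metis dvd_diff)
  thus False using h1_odd_part_int by blast
qed

end



lemma of_int_pm1_inj: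
  fixes u v :: int
  assumes "u \<in> {1,-1}" "v \<in> {1,-1}" "(of_int u :: 'a::field) = of_int v" "(2::'a) \<noteq> 0"
  shows "u = v"
proof (rule ccontr)
  assume "u \<noteq> v"
  hence "(u = 1 \<and> v = -1) \<or> (u = -1 \<and> v = 1)" using assms(1,2) by auto
  hence "(1::'a) = -1" using assms(3) by auto
  hence "(2::'a) = 0" by (metis add_eq_0_iff2 one_add_one)
  thus False using assms(4) by simp
qed

lemma qchar_pm1: "x \<noteq> 0 \<Longrightarrow> qchar x \<in> {1,-1}" by (simp add: qchar_def)

context mctx2
begin

lemma HM: "int nn dvd (int e2 * a + int e1 * int k) * int f1 * int R"
proof -
  have h: "int nn dvd int e2 * int f1 * int R" using H1 by (metis of_nat_dvd_iff of_nat_mult)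
  have "(int e2 * a + int e1 * int k) * int f1 * int R = (int e2 * int f1 * int R) * a + int nn * (int k * int R)"
    using n1 by (simp add: algebra_simps)
  thus ?thesis using h by simp
qed

lemma ir1: "int (r - 1) = int r - 1" using r3 by simp

lemma HN1: "int nn dvd (int e2 * a + int e1 * int k) * int f2 * (int r - 1)"
proof -
  have h: "int nn dvd int e1 * int f2 * (int r - 1)" using H2 ir1 by (metis of_nat_dvd_iff of_nat_mult)
  have "(int e2 * a + int e1 * int k) * int f2 * (int r - 1) = (int e1 * int f2 * (int r - 1)) * int k + int nn * (a * (int r - 1))"
    using n2 by (simp add: algebra_simps)
  thus ?thesis using h by simp
qed

lemma HN2: "int nn dvd (int h1 * a + int e2 * int k) * int f2 * (int r - 1)"
proof -
  have h: "int nn dvd int h1 * int f2 * (int r - 1)" using H3 ir1 by (metis of_nat_dvd_iff of_nat_mult)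
  have "(int h1 * a + int e2 * int k) * int f2 * (int r - 1) = (int h1 * int f2 * (int r - 1)) * a + int nn * (int k * (int r - 1))"
    using n2 by (simp add: algebra_simps)
  thus ?thesis using h by simp
qed

lemma E_half_odd: "E (int h1 * (2 * a + 1) * int f1) = -1"
proof -
  have "int h1 * int f1 = int (nn div 2)" using h1f1 by (metis of_nat_mult)
  hence "int h1 * (2 * a + 1) * int f1 = int (nn div 2) + int nn * a"
    using h2 by (simp add: algebra_simps)
  hence "E (int h1 * (2 * a + 1) * int f1) = E (int (nn div 2)) * E (int nn * a)" by (simp add: E_add)
  also have "E (int nn * a) = 1" using E_one by simp
  finally show ?thesis using E_half by simp
qed


lemma e1_ev: "even e1"
proof -
  have "even (2*h1)" by simp
  thus ?thesis by (simp only: e1even[symmetric])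
qed

definition SS where "SS = (\<Union>\<mu>\<in>{1..s}. Cm \<mu>) \<union> (\<Union>\<nu>\<in>{1..t}. Cn \<nu>)"

lemma finM: "finite (\<Union>\<mu>\<in>I. Cm \<mu>)" if "finite I" using Cm_props that by auto
lemma finN: "finite (\<Union>\<nu>\<in>I. Cn \<nu>)" if "finite I" using Cn_props that by auto

lemma chi_prod: "(\<Prod>x\<in>A. f x) ^ m = (\<Prod>x\<in>A. f x ^ m)" for f :: "_ \<Rightarrow> 'a"
  by (rule prod_power_distrib)

lemma mainM:
  assumes b: "b \<in> Cm \<mu>0" and mu0: "\<mu>0 \<in> {1..s}"
  shows "qchar (LS SS b) = (-1)^((s-1)*(r+1) div 2)"
proof -
  obtain k0 where k0: "b = E (int e2 * i \<mu>0 + int e1 * int k0)" using b memM by auto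
  define z0 where "z0 = int e2 * i \<mu>0 + int e1 * int k0"
  have bz: "b = E z0" using k0 z0_def by simp
  define I where "I = {1..s} - {\<mu>0}"
  have finI: "finite I" unfolding I_def by simp
  have cardI: "card I = s - 1" unfolding I_def using mu0 by simp
  have bI: "b \<notin> Cm \<mu>" if "\<mu> \<in> I" for \<mu>
  proof -
    have "Cm \<mu>0 \<inter> Cm \<mu> = {}" using that mu0 unfolding I_def by (intro dM) auto
    thus ?thesis using b by auto
  qed
  have bN: "b \<notin> Cn \<nu>" for \<nu> using dMN[of \<mu>0 \<nu>] b by auto
  define U where "U = (\<Union>\<mu>\<in>I. Cm \<mu>)"
  define V where "V = (\<Union>\<nu>\<in>{1..t}. Cn \<nu>)"
  have Seq: "SS - {b} = (Cm \<mu>0 - {b}) \<union> (U \<union> V)"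
  proof -
    have "(\<Union>\<mu>\<in>{1..s}. Cm \<mu>) = Cm \<mu>0 \<union> U" unfolding U_def I_def using mu0 by blast
    moreover have "b \<notin> U" unfolding U_def using bI by auto
    moreover have "b \<notin> V" unfolding V_def using bN by auto
    ultimately show ?thesis unfolding SS_def V_def by blast
  qed
  have finC0: "finite (Cm \<mu>0)" using Cm_props by simp
  have finU: "finite U" unfolding U_def using finM[OF finI] .
  have finV: "finite V" unfolding V_def using finN by simp
  have disj1: "(Cm \<mu>0 - {b}) \<inter> (U \<union> V) = {}"
  proof -
    have "Cm \<mu>0 \<inter> U = {}" unfolding U_def I_def using dM mu0 by fastforce
    moreover have "Cm \<mu>0 \<inter> V = {}" unfolding V_def using dMN by fastforce
    ultimately show ?thesis by blast
  qed
  have disj2: "U \<inter> V = {}" unfolding U_def V_def using dMN by fastforce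
  have LS_eq: "LS SS b = (\<Prod>c\<in>Cm \<mu>0 - {b}. b - c) * ((\<Prod>c\<in>U. b - c) * (\<Prod>c\<in>V. b - c))"
    unfolding LS_def Seq using finC0 finU finV disj1 disj2
    by (simp add: prod.union_disjoint)
  have PU: "(\<Prod>c\<in>U. b - c) = (\<Prod>\<mu>\<in>I. \<Prod>c\<in>Cm \<mu>. b - c)"
    unfolding U_def using finI Cm_props dM unfolding I_def
    by (intro prod.UNION_disjoint) auto
  have PV: "(\<Prod>c\<in>V. b - c) = (\<Prod>\<nu>\<in>{1..t}. \<Prod>c\<in>Cn \<nu>. b - c)"
    unfolding V_def using Cn_props dN by (intro prod.UNION_disjoint) auto
  define ch where "ch = (\<lambda>x::'a. x ^ (nn div 2))"
  have chm: "ch (x * y) = ch x * ch y" for x y unfolding ch_def by (simp add: power_mult_distrib)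
  have chp: "ch (\<Prod>x\<in>A. f x) = (\<Prod>x\<in>A. ch (f x))" for A and f :: "_ \<Rightarrow> 'a"
    unfolding ch_def by (rule prod_power_distrib)
  have P0: "(\<Prod>c\<in>Cm \<mu>0 - {b}. b - c) = of_nat f1 * b^(f1 - 1)"
    using Cm_props[of \<mu>0] pos b by (intro roots_prod_inside) auto
  have chP0: "ch (\<Prod>c\<in>Cm \<mu>0 - {b}. b - c) = 1"
  proof -
    have "ch (of_nat f1) = 1" unfolding ch_def using n1 by (intro chi_of_nat) simp
    moreover have "ch b = 1" unfolding ch_def bz z0_def
      using e1_ev e2_even by (intro chi_E_even) simp
    moreover have "ch (b^(f1-1)) = ch b ^ (f1 - 1)" unfolding ch_def
      by (simp only: power_mult[symmetric] mult.commute)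
    ultimately show ?thesis unfolding P0 chm by simp
  qed
  have HM0: "int nn dvd (int e2 * a) * int f1 * int R" for a using HM[of a 0] by simp
  have chU: "ch (\<Prod>c\<in>U. b - c) = ((-1)^R)^(s-1)"
  proof -
    have "ch (\<Prod>\<mu>\<in>I. \<Prod>c\<in>Cm \<mu>. b - c) = (\<Prod>\<mu>\<in>I. ch (\<Prod>c\<in>Cm \<mu>. b - c))" by (rule chp)
    also have "\<dots> = (\<Prod>\<mu>\<in>I. (-1)^R)"
    proof (rule prod.cong[OF refl])
      fix \<mu> assume mu: "\<mu> \<in> I"
      have pe: "(\<Prod>c\<in>Cm \<mu>. b - c) = b^f1 - E (int e2 * i \<mu>)^f1"
        using Cm_props[of \<mu>] pos by (intro roots_prod_outside) auto
      have pz: "(\<Prod>c\<in>Cm \<mu>. b - c) \<noteq> 0" using bI[OF mu] Cm_props[of \<mu>] by (simp add: prod_zero_iff)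
      have nz: "b^f1 - E (int e2 * i \<mu>)^f1 \<noteq> 0" by (rule pz[unfolded pe])
      have ne: "E (z0 * int f1) \<noteq> E (int e2 * i \<mu> * int f1)" using nz bz by (simp add: E_pow)
      have "(E (z0 * int f1) - E (int e2 * i \<mu> * int f1)) ^ (nn div 2) = (-1)^R"
      proof (rule R1[OF ne])
        show "E (z0 * int f1) ^ r * E (z0 * int f1) = 1"
          by (rule E_mu) (use HM[of "i \<mu>0" k0] in \<open>simp add: z0_def\<close>)
        show "E (int e2 * i \<mu> * int f1) ^ r * E (int e2 * i \<mu> * int f1) = 1"
          by (rule E_mu) (use HM0[of "i \<mu>"] in simp)
        have "(E (z0 * int f1) * E (int e2 * i \<mu> * int f1)) ^ R
            = E ((z0 * int f1) * int R + (int e2 * i \<mu> * int f1) * int R)"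
          by (simp add: E_pow algebra_simps flip: E_add)
        also have "\<dots> = 1" unfolding E_one
          using HM[of "i \<mu>0" k0] HM0[of "i \<mu>"] by (intro dvd_add) (simp_all add: z0_def)
        finally show "(E (z0 * int f1) * E (int e2 * i \<mu> * int f1)) ^ R = 1" .
      qed
      thus "ch (\<Prod>c\<in>Cm \<mu>. b - c) = (-1)^R" unfolding ch_def pe by (simp add: bz E_pow)
    qed
    also have "\<dots> = ((-1)^R)^(s-1)" using cardI by simp
    finally show ?thesis using PU by simp
  qed
  have chV: "ch (\<Prod>c\<in>V. b - c) = 1"
  proof -
    have "ch (\<Prod>\<nu>\<in>{1..t}. \<Prod>c\<in>Cn \<nu>. b - c) = (\<Prod>\<nu>\<in>{1..t}. ch (\<Prod>c\<in>Cn \<nu>. b - c))" by (rule chp)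
    also have "\<dots> = (\<Prod>\<nu>\<in>{1..t}. 1)"
    proof (rule prod.cong[OF refl])
      fix \<nu> assume nu: "\<nu> \<in> {1..t}"
      have pe: "(\<Prod>c\<in>Cn \<nu>. b - c) = b^f2 - E (int h1 * (2 * j \<nu> + 1))^f2"
        using Cn_props[of \<nu>] pos by (intro roots_prod_outside) auto
      have pz: "(\<Prod>c\<in>Cn \<nu>. b - c) \<noteq> 0" using bN[of \<nu>] Cn_props[of \<nu>] by (simp add: prod_zero_iff)
      have nz: "b^f2 - E (int h1 * (2 * j \<nu> + 1))^f2 \<noteq> 0" by (rule pz[unfolded pe])
      have ne: "E (z0 * int f2) \<noteq> E (int h1 * (2 * j \<nu> + 1) * int f2)" using nz bz by (simp add: E_pow)
      have "(E (z0 * int f2) - E (int h1 * (2 * j \<nu> + 1) * int f2)) ^ (nn div 2) = 1"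
      proof (rule Fix_diff[OF ne])
        show "E (z0 * int f2) ^ r = E (z0 * int f2)"
          by (rule E_fix) (use HN1[of "i \<mu>0" k0] in \<open>simp add: z0_def\<close>)
        show "E (int h1 * (2 * j \<nu> + 1) * int f2) ^ r = E (int h1 * (2 * j \<nu> + 1) * int f2)"
          by (rule E_fix) (use HN2[of "2 * j \<nu> + 1" 0] in simp)
      qed
      thus "ch (\<Prod>c\<in>Cn \<nu>. b - c) = 1" unfolding ch_def pe by (simp add: bz E_pow)
    qed
    also have "\<dots> = 1" by simp
    finally show ?thesis using PV by simp
  qed
  have chL: "ch (LS SS b) = ((-1)^R)^(s-1)" unfolding LS_eq chm chP0 chU chV by simp
  have finS: "finite SS" unfolding SS_def using finM finN by simp
  have L0: "LS SS b \<noteq> 0" unfolding LS_def using finS by (simp add: prod_zero_iff)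
  have "of_int (qchar (LS SS b)) = ch (LS SS b)" unfolding ch_def by (rule qchar_chi[OF L0])
  also have "\<dots> = of_int ((-1)^((s-1)*(r+1) div 2))"
  proof -
    have "(s-1)*(r+1) div 2 = R * (s - 1)" using r1_2R by simp
    thus ?thesis unfolding chL by (simp add: power_mult)
  qed
  finally have "of_int (qchar (LS SS b)) = (of_int ((-1)^((s-1)*(r+1) div 2)) :: 'a)" .
  moreover have "((-1::int)^((s-1)*(r+1) div 2)) \<in> {1,-1}"
    by (cases "even ((s-1)*(r+1) div 2)") auto
  ultimately show ?thesis using of_int_pm1_inj qchar_pm1[OF L0] two_nz[OF pp cardr oddr] by blast
qed


lemma mainN:
  assumes b: "b \<in> Cn \<nu>0" and nu0: "\<nu>0 \<in> {1..t}"
  shows "qchar (LS SS b) = 1"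
proof -
  obtain k0 where k0: "b = E (int h1 * (2 * j \<nu>0 + 1) + int e2 * int k0)" using b memN by auto
  define z0 where "z0 = int h1 * (2 * j \<nu>0 + 1) + int e2 * int k0"
  have bz: "b = E z0" using k0 z0_def by simp
  define J where "J = {1..t} - {\<nu>0}"
  have finJ: "finite J" unfolding J_def by simp
  have bJ: "b \<notin> Cn \<nu>" if "\<nu> \<in> J" for \<nu>
  proof -
    have "Cn \<nu>0 \<inter> Cn \<nu> = {}" using that nu0 unfolding J_def by (intro dN) auto
    thus ?thesis using b by auto
  qed
  have bM: "b \<notin> Cm \<mu>" for \<mu> using dMN[of \<mu> \<nu>0] b by auto
  define U where "U = (\<Union>\<nu>\<in>J. Cn \<nu>)"
  define V where "V = (\<Union>\<mu>\<in>{1..s}. Cm \<mu>)"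
  have Seq: "SS - {b} = (Cn \<nu>0 - {b}) \<union> (U \<union> V)"
  proof -
    have "(\<Union>\<nu>\<in>{1..t}. Cn \<nu>) = Cn \<nu>0 \<union> U" unfolding U_def J_def using nu0 by blast
    moreover have "b \<notin> U" unfolding U_def using bJ by auto
    moreover have "b \<notin> V" unfolding V_def using bM by auto
    ultimately show ?thesis unfolding SS_def V_def by blast
  qed
  have finC0: "finite (Cn \<nu>0)" using Cn_props by simp
  have finU: "finite U" unfolding U_def using finN[OF finJ] .
  have finV: "finite V" unfolding V_def using finM by simp
  have disj1: "(Cn \<nu>0 - {b}) \<inter> (U \<union> V) = {}"
  proof -
    have "Cn \<nu>0 \<inter> U = {}" unfolding U_def J_def using dN nu0 by fastforce
    moreover have "Cn \<nu>0 \<inter> V = {}" unfolding V_def using dMN by fastforce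
    ultimately show ?thesis by blast
  qed
  have disj2: "U \<inter> V = {}" unfolding U_def V_def using dMN by fastforce
  have LS_eq: "LS SS b = (\<Prod>c\<in>Cn \<nu>0 - {b}. b - c) * ((\<Prod>c\<in>U. b - c) * (\<Prod>c\<in>V. b - c))"
    unfolding LS_def Seq using finC0 finU finV disj1 disj2
    by (simp add: prod.union_disjoint)
  have PU: "(\<Prod>c\<in>U. b - c) = (\<Prod>\<nu>\<in>J. \<Prod>c\<in>Cn \<nu>. b - c)"
    unfolding U_def using finJ Cn_props dN unfolding J_def
    by (intro prod.UNION_disjoint) auto
  have PV: "(\<Prod>c\<in>V. b - c) = (\<Prod>\<mu>\<in>{1..s}. \<Prod>c\<in>Cm \<mu>. b - c)"
    unfolding V_def using Cm_props dM by (intro prod.UNION_disjoint) auto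
  define ch where "ch = (\<lambda>x::'a. x ^ (nn div 2))"
  have chm: "ch (x * y) = ch x * ch y" for x y unfolding ch_def by (simp add: power_mult_distrib)
  have chp: "ch (\<Prod>x\<in>A. f x) = (\<Prod>x\<in>A. ch (f x))" for A and f :: "_ \<Rightarrow> 'a"
    unfolding ch_def by (rule prod_power_distrib)
  have P0: "(\<Prod>c\<in>Cn \<nu>0 - {b}. b - c) = of_nat f2 * b^(f2 - 1)"
    using Cn_props[of \<nu>0] pos b by (intro roots_prod_inside) auto
  have chP0: "ch (\<Prod>c\<in>Cn \<nu>0 - {b}. b - c) = 1"
  proof -
    have "ch (of_nat f2) = 1" unfolding ch_def using n2 by (intro chi_of_nat) simp
    moreover have "ch b = 1" unfolding ch_def bz z0_def
      using h1_even e2_even by (intro chi_E_even) simp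
    moreover have "ch (b^(f2-1)) = ch b ^ (f2 - 1)" unfolding ch_def
      by (simp only: power_mult[symmetric] mult.commute)
    ultimately show ?thesis unfolding P0 chm by simp
  qed
  have HM0: "int nn dvd (int e2 * a) * int f1 * int R" for a using HM[of a 0] by simp
  have chU: "ch (\<Prod>c\<in>U. b - c) = 1"
  proof -
    have "ch (\<Prod>\<nu>\<in>J. \<Prod>c\<in>Cn \<nu>. b - c) = (\<Prod>\<nu>\<in>J. ch (\<Prod>c\<in>Cn \<nu>. b - c))" by (rule chp)
    also have "\<dots> = (\<Prod>\<nu>\<in>J. 1)"
    proof (rule prod.cong[OF refl])
      fix \<nu> assume nu: "\<nu> \<in> J"
      have pe: "(\<Prod>c\<in>Cn \<nu>. b - c) = b^f2 - E (int h1 * (2 * j \<nu> + 1))^f2"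
        using Cn_props[of \<nu>] pos by (intro roots_prod_outside) auto
      have pz: "(\<Prod>c\<in>Cn \<nu>. b - c) \<noteq> 0" using bJ[OF nu] Cn_props[of \<nu>] by (simp add: prod_zero_iff)
      have nz: "b^f2 - E (int h1 * (2 * j \<nu> + 1))^f2 \<noteq> 0" by (rule pz[unfolded pe])
      have ne: "E (z0 * int f2) \<noteq> E (int h1 * (2 * j \<nu> + 1) * int f2)" using nz bz by (simp add: E_pow)
      have "(E (z0 * int f2) - E (int h1 * (2 * j \<nu> + 1) * int f2)) ^ (nn div 2) = 1"
      proof (rule Fix_diff[OF ne])
        show "E (z0 * int f2) ^ r = E (z0 * int f2)"
          by (rule E_fix) (use HN2[of "2 * j \<nu>0 + 1" k0] in \<open>simp add: z0_def\<close>)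
        show "E (int h1 * (2 * j \<nu> + 1) * int f2) ^ r = E (int h1 * (2 * j \<nu> + 1) * int f2)"
          by (rule E_fix) (use HN2[of "2 * j \<nu> + 1" 0] in simp)
      qed
      thus "ch (\<Prod>c\<in>Cn \<nu>. b - c) = 1" unfolding ch_def pe by (simp add: bz E_pow)
    qed
    also have "\<dots> = 1" by simp
    finally show ?thesis using PU by simp
  qed
  have chV: "ch (\<Prod>c\<in>V. b - c) = 1"
  proof -
    have "ch (\<Prod>\<mu>\<in>{1..s}. \<Prod>c\<in>Cm \<mu>. b - c) = (\<Prod>\<mu>\<in>{1..s}. ch (\<Prod>c\<in>Cm \<mu>. b - c))" by (rule chp)
    also have "\<dots> = (\<Prod>\<mu>\<in>{1..s}. 1)"
    proof (rule prod.cong[OF refl])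
      fix \<mu> assume mu: "\<mu> \<in> {1..s}"
      define x where "x = E (int e2 * int k0 * int f1)"
      define y where "y = E (int e2 * i \<mu> * int f1)"
      have bf: "b^f1 = - x"
      proof -
        have "b^f1 = E (int h1 * (2 * j \<nu>0 + 1) * int f1 + int e2 * int k0 * int f1)"
          by (simp add: bz z0_def E_pow algebra_simps)
        also have "\<dots> = - x" unfolding E_add E_half_odd x_def by simp
        finally show ?thesis .
      qed
      have pe: "(\<Prod>c\<in>Cm \<mu>. b - c) = b^f1 - E (int e2 * i \<mu>)^f1"
        using Cm_props[of \<mu>] pos by (intro roots_prod_outside) auto
      also have "\<dots> = - (x + y)" unfolding bf y_def by (simp add: E_pow)
      finally have pe2: "(\<Prod>c\<in>Cm \<mu>. b - c) = - (x + y)" .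
      have pz: "(\<Prod>c\<in>Cm \<mu>. b - c) \<noteq> 0" using bM[of \<mu>] Cm_props[of \<mu>] by (simp add: prod_zero_iff)
      have ne: "x \<noteq> - y" using pz[unfolded pe2] by (metis minus_minus neg_equal_iff_equal add.right_inverse minus_zero)
      have "(- (x + y)) ^ (nn div 2) = 1"
      proof (rule R2[OF ne])
        show "x ^ r * x = 1" unfolding x_def
          by (rule E_mu) (use HM0[of "int k0"] in simp)
        show "y ^ r * y = 1" unfolding y_def
          by (rule E_mu) (use HM0[of "i \<mu>"] in simp)
        have "(x * y) ^ R = E ((int e2 * int k0 * int f1) * int R + (int e2 * i \<mu> * int f1) * int R)"
          unfolding x_def y_def by (simp add: E_pow algebra_simps flip: E_add)
        also have "\<dots> = 1" unfolding E_one
          using HM0[of "int k0"] HM0[of "i \<mu>"] by (intro dvd_add) simp_all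
        finally show "(x * y) ^ R = 1" .
      qed
      thus "ch (\<Prod>c\<in>Cm \<mu>. b - c) = 1" unfolding ch_def pe2 .
    qed
    also have "\<dots> = 1" by simp
    finally show ?thesis using PV by simp
  qed
  have chL: "ch (LS SS b) = 1" unfolding LS_eq chm chP0 chU chV by simp
  have finS: "finite SS" unfolding SS_def using finM finN by simp
  have L0: "LS SS b \<noteq> 0" unfolding LS_def using finS by (simp add: prod_zero_iff)
  have "of_int (qchar (LS SS b)) = ch (LS SS b)" unfolding ch_def by (rule qchar_chi[OF L0])
  hence "of_int (qchar (LS SS b)) = (of_int 1 :: 'a)" using chL by simp
  thus ?thesis using of_int_pm1_inj qchar_pm1[OF L0] two_nz[OF pp cardr oddr] by blast
qed

end


theorem mainTheorem6:
  fixes \<theta> :: "'a::{finite,field}"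
    and r e1 f1 e2 f2 l s t :: nat
    and i j :: "nat \<Rightarrow> int"
  assumes "prime_power r" and "odd r"
    and "CARD('a) = r ^ 2"
    and "primitive_elem \<theta>"
    and "e1 > 0" "f1 > 0" "e2 > 0" "f2 > 0"
    and "CARD('a) - 1 = e1 * f1" and "CARD('a) - 1 = e2 * f2"
    and "l \<ge> 2" and "e1 mod 2 ^ (l + 1) = 2 ^ l" and "2 ^ l dvd e2"
    and "2 * e2 dvd e1 * (r - 1)" and "e1 dvd e2 * (r + 1)"
    and "1 \<le> s" "s \<le> e1 div gcd e1 e2"
    and "1 \<le> t" "t \<le> e2 div gcd e1 e2"
    and "\<forall>\<mu>\<in>{1..s}. \<forall>\<mu>'\<in>{1..s}. \<mu> \<noteq> \<mu>' \<longrightarrow>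
            \<not> [i \<mu> = i \<mu>'] (mod int (e1 div gcd e1 e2))"
    and "\<forall>\<nu>\<in>{1..t}. \<forall>\<nu>'\<in>{1..t}. \<nu> \<noteq> \<nu>' \<longrightarrow>
            \<not> [j \<nu> = j \<nu>'] (mod int (e2 div gcd e1 e2))"
  shows "let A = cyc (\<theta> ^ e1); B = cyc (\<theta> ^ e2);
             \<beta> = \<theta> ^ e2; \<gamma> = \<theta> ^ (e1 div 2);
             M = (\<Union>\<mu>\<in>{1..s}. (\<lambda>a. \<beta> powi (i \<mu>) * a) ` A);
             N = (\<Union>\<nu>\<in>{1..t}. (\<lambda>a. \<gamma> powi (2 * j \<nu> + 1) * a) ` B);
             S = M \<union> N
         in (\<forall>b\<in>M. qchar (LS S b) = (-1) ^ ((s - 1) * (r + 1) div 2))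
          \<and> (\<forall>b\<in>N. qchar (LS S b) = 1)"
proof -
  define n where "n = CARD('a) - 1"
  interpret M: mctx2 \<theta> n r e1 f1 e2 f2 l s t i j
    by unfold_locales (use assms n_def in auto)
  have 1: "\<forall>b\<in>(\<Union>\<mu>\<in>{1..s}. M.Cm \<mu>). qchar (LS M.SS b) = (-1)^((s-1)*(r+1) div 2)"
    using M.mainM by blast
  have 2: "\<forall>b\<in>(\<Union>\<nu>\<in>{1..t}. M.Cn \<nu>). qchar (LS M.SS b) = 1"
    using M.mainN by blast
  show ?thesis unfolding Let_def using 1 2 unfolding M.SS_def M.Cm_def M.Cn_def by simp
qed

end
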